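(* Assume $k\ge 2\cdot10^8$, the stream is in random order, and there exists a dense set $D\subseteq V$. Then with probability at least $0.01$ the output $S$ of Algorithm 1 satisfies $f(S)\ge0.50025\cdot\mathrm{OPT}$.
   Context: $V$ is a finite ground set with $|V|=n$; $f:2^V\to\mathbb{R}_{\ge0}$ is monotone, submodular and normalized ($f(\emptyset)=0$); $f(X\mid Y)=f(X\cup Y)-f(Y)$ and $f(e\mid Y)=f(\{e\}\mid Y)$. $k$ is a positive integer with $k\le n$, $\mathrm{OPT}=\max\{f(S):S\subseteq V,|S|\le k\}$. A stream is an ordering $e_1,\dots,e_n$ of $V$; "random order" means a uniformly random permutation. A set $D$ is dense if $|D|\le\eta k$ and $f(D)\ge\frac{1-\gamma}{2}\mathrm{OPT}$, where $\gamma=10^{-2}$, $\eta=5\cdot10^{-5}$. Algorithm 1 (knows $\mathrm{OPT}$): start with $S=\emptyset$; for $i=1,\dots,n$, add $e_i$ to $S$ if $|S|<k$ and either ($i\le 0.9n$ and $f(e_i\mid S)\ge\frac{100}{k}\mathrm{OPT}$) or ($i>0.9n$ and $f(e_i\mid S)\ge\frac{1}{10k}\mathrm{OPT}$); return $S$. *)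

theory Defs
  imports "HOL-Probability.Probability"
begin

definition monotone_fn :: "'a set \<Rightarrow> ('a set \<Rightarrow> real) \<Rightarrow> bool" where
  "monotone_fn V f \<longleftrightarrow> (\<forall>A B. A \<subseteq> B \<and> B \<subseteq> V \<longrightarrow> f A \<le> f B)"

definition submodular :: "'a set \<Rightarrow> ('a set \<Rightarrow> real) \<Rightarrow> bool" where
  "submodular V f \<longleftrightarrow>
     (\<forall>A B. A \<subseteq> V \<and> B \<subseteq> V \<longrightarrow> f (A \<union> B) + f (A \<inter> B) \<le> f A + f B)"

definition OPT :: "'a set \<Rightarrow> ('a set \<Rightarrow> real) \<Rightarrow> nat \<Rightarrow> real" where
  "OPT V f k = Max (f ` {S. S \<subseteq> V \<and> card S \<le> k})"

definition gamma :: real where "gamma = 1/100"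
definition eta :: real where "eta = 5 / 100000"

definition dense :: "'a set \<Rightarrow> ('a set \<Rightarrow> real) \<Rightarrow> nat \<Rightarrow> 'a set \<Rightarrow> bool" where
  "dense V f k D \<longleftrightarrow> D \<subseteq> V \<and> real (card D) \<le> eta * real k
      \<and> f D \<ge> (1 - gamma) / 2 * OPT V f k"

text \<open>Algorithm 1. Parameters: f, the value opt (= OPT), k, n (stream length),
  i = 1-based index of the current element, remaining stream, current set S.\<close>
fun alg1_aux :: "('a set \<Rightarrow> real) \<Rightarrow> real \<Rightarrow> nat \<Rightarrow> nat \<Rightarrow> nat \<Rightarrow> 'a list \<Rightarrow> 'a set \<Rightarrow> 'a set" where
  "alg1_aux f opt k n i [] S = S"
| "alg1_aux f opt k n i (e # es) S =
     alg1_aux f opt k n (Suc i) es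
       (if card S < k \<and>
           ((real i \<le> 9/10 * real n \<and> f (insert e S) - f S \<ge> 100 / real k * opt) \<or>
            (real i > 9/10 * real n \<and> f (insert e S) - f S \<ge> 1 / (10 * real k) * opt))
        then insert e S else S)"

definition algorithm1 :: "('a set \<Rightarrow> real) \<Rightarrow> real \<Rightarrow> nat \<Rightarrow> 'a list \<Rightarrow> 'a set" where
  "algorithm1 f opt k xs = alg1_aux f opt k (length xs) 1 xs {}"

end

theory Submission
  imports Defs
begin


definition thr :: "real \<Rightarrow> nat \<Rightarrow> nat \<Rightarrow> nat \<Rightarrow> real" where
  "thr opt k n i = (if real i \<le> 9/10 * real n then 100 / real k * opt else 1/(10 * real k) * opt)"

lemma alg_step:
  "alg1_aux f opt k n i (e#es) S = alg1_aux f opt k n (Suc i) es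
     (if card S < k \<and> f (insert e S) - f S \<ge> thr opt k n i then insert e S else S)"
proof -
  have "(card S < k \<and>
           ((real i \<le> 9/10 * real n \<and> f (insert e S) - f S \<ge> 100 / real k * opt) \<or>
            (real i > 9/10 * real n \<and> f (insert e S) - f S \<ge> 1 / (10 * real k) * opt)))
        = (card S < k \<and> f (insert e S) - f S \<ge> thr opt k n i)"
    unfolding thr_def by auto
  then show ?thesis by simp
qed

declare alg1_aux.simps(2)[simp del]

lemma alg_append:
  "alg1_aux f opt k n i (xs@ys) S = alg1_aux f opt k n (i + length xs) ys (alg1_aux f opt k n i xs S)"
  by (induction xs arbitrary: i S) (simp_all add: alg_step)

lemma alg_sub: "S \<subseteq> alg1_aux f opt k n i es S \<and> alg1_aux f opt k n i es S \<subseteq> S \<union> set es"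
proof (induction es arbitrary: i S)
  case Nil then show ?case by simp
next
  case (Cons e es)
  show ?case using Cons.IH[where i="Suc i" and S="insert e S"] Cons.IH[where i="Suc i" and S=S] by (auto simp: alg_step)
qed

lemma alg_card: "finite S \<Longrightarrow> card S \<le> k \<Longrightarrow>
   finite (alg1_aux f opt k n i es S) \<and> card (alg1_aux f opt k n i es S) \<le> k"
proof (induction es arbitrary: i S)
  case Nil then show ?case by simp
next
  case (Cons e es)
  show ?case
  proof (cases "card S < k \<and> f (insert e S) - f S \<ge> thr opt k n i")
    case True
    have eq: "alg1_aux f opt k n i (e#es) S = alg1_aux f opt k n (Suc i) es (insert e S)"
      by (subst alg_step) (simp only: True simp_thms if_True)
    have "card (insert e S) \<le> k" using True Cons.prems by (simp add: card_insert_if)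
    then show ?thesis using Cons.IH[where i="Suc i" and S="insert e S"] Cons.prems eq by simp
  next
    case False
    have eq: "alg1_aux f opt k n i (e#es) S = alg1_aux f opt k n (Suc i) es S"
      by (subst alg_step) (simp only: False if_False)
    then show ?thesis using Cons.IH[where i="Suc i" and S="S"] Cons.prems by simp
  qed
qed

lemma alg_gain:
  assumes "\<forall>j. i \<le> j \<longrightarrow> j < i + length es \<longrightarrow> thr opt k n j = \<tau>" "\<tau> \<ge> 0" "finite S"
  shows "f (alg1_aux f opt k n i es S) - f S \<ge>
          (real (card (alg1_aux f opt k n i es S)) - real (card S)) * \<tau>"
  using assms
proof (induction es arbitrary: i S)
  case Nil then show ?case by simp
next
  case (Cons e es)
  define S' where "S' = (if card S < k \<and> f (insert e S) - f S \<ge> thr opt k n i then insert e S else S)"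
  have th: "thr opt k n i = \<tau>" using Cons.prems(1) by auto
  have IH: "f (alg1_aux f opt k n (Suc i) es S') - f S' \<ge>
          (real (card (alg1_aux f opt k n (Suc i) es S')) - real (card S')) * \<tau>"
    apply (rule Cons.IH) using Cons.prems by (auto simp: S'_def)
  have st: "f S' - f S \<ge> (real (card S') - real (card S)) * \<tau>"
  proof (cases "card S < k \<and> f (insert e S) - f S \<ge> thr opt k n i")
    case True
    then have S': "S' = insert e S" by (simp add: S'_def)
    show ?thesis
    proof (cases "e \<in> S")
      case True2: True
      then show ?thesis using S' by (simp add: insert_absorb)
    next
      case False
      then have "card S' = card S + 1" using S' Cons.prems(3) by simp
      then show ?thesis using True th S' by simp
    qed
  next
    case False
    then have "S' = S" by (simp only: S'_def if_False)
    then show ?thesis by simp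
  qed
  have eq: "alg1_aux f opt k n i (e#es) S = alg1_aux f opt k n (Suc i) es S'"
    by (simp only: alg_step S'_def)
  show ?case using IH st unfolding eq left_diff_distrib by linarith
qed

lemma alg_reject:
  assumes "\<forall>j. i \<le> j \<longrightarrow> j < i + length es \<longrightarrow> thr opt k n j = \<tau>"
    "e \<in> set es" "e \<notin> alg1_aux f opt k n i es S"
  shows "\<exists>T. S \<subseteq> T \<and> T \<subseteq> alg1_aux f opt k n i es S \<and> \<not> (card T < k \<and> f (insert e T) - f T \<ge> \<tau>)"
  using assms
proof (induction es arbitrary: i S)
  case Nil then show ?case by simp
next
  case (Cons x es)
  define S' where "S' = (if card S < k \<and> f (insert x S) - f S \<ge> thr opt k n i then insert x S else S)"
  have th: "thr opt k n i = \<tau>" using Cons.prems(1) by auto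
  have R: "alg1_aux f opt k n i (x#es) S = alg1_aux f opt k n (Suc i) es S'"
    by (simp only: alg_step S'_def)
  have sub: "S' \<subseteq> alg1_aux f opt k n (Suc i) es S'" using alg_sub[where S=S' and i="Suc i" and es=es and f=f] by (rule conjunct1)
  have SS': "S \<subseteq> S'" unfolding S'_def by (cases "card S < k \<and> f (insert x S) - f S \<ge> thr opt k n i") auto
  show ?case
  proof (cases "e = x")
    case True
    then have "e \<notin> S'" using Cons.prems(3) R sub by blast
    then have "\<not> (card S < k \<and> f (insert e S) - f S \<ge> \<tau>)"
    proof -
      assume "e \<notin> S'"
      show ?thesis
      proof
        assume c: "card S < k \<and> f (insert e S) - f S \<ge> \<tau>"
        then have "S' = insert x S" using True th by (simp add: S'_def)
        then show False using \<open>e \<notin> S'\<close> True by blast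
      qed
    qed
    then show ?thesis using R sub SS' by blast
  next
    case False
    have t1: "\<forall>j. Suc i \<le> j \<longrightarrow> j < Suc i + length es \<longrightarrow> thr opt k n j = \<tau>"
      using Cons.prems(1) by auto
    have t2: "e \<in> set es" using Cons.prems(2) False by simp
    have t3: "e \<notin> alg1_aux f opt k n (Suc i) es S'" using Cons.prems(3) R by simp
    from t1 t2 t3 have "\<exists>T. S' \<subseteq> T \<and> T \<subseteq> alg1_aux f opt k n (Suc i) es S' \<and>
        \<not> (card T < k \<and> f (insert e T) - f T \<ge> \<tau>)"
      by (rule Cons.IH[where i="Suc i" and S=S'])
    then obtain T where T: "S' \<subseteq> T" "T \<subseteq> alg1_aux f opt k n (Suc i) es S'"
        "\<not> (card T < k \<and> f (insert e T) - f T \<ge> \<tau>)" by blast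
    have "S \<subseteq> T" using SS' T(1) by (rule order_trans)
    then show ?thesis using T(2,3) R by auto
  qed
qed



lemma OPT_ge: "finite V \<Longrightarrow> S \<subseteq> V \<Longrightarrow> card S \<le> k \<Longrightarrow> f S \<le> OPT V f k"
  unfolding OPT_def by (rule Max_ge) (auto intro: finite_subset[of _ "Pow V"] simp: finite_image_iff)

lemma OPT_att: "finite V \<Longrightarrow> \<exists>Q. Q \<subseteq> V \<and> card Q \<le> k \<and> f Q = OPT V f k"
proof -
  assume "finite V"
  have fin: "finite (f ` {S. S \<subseteq> V \<and> card S \<le> k})"
    using \<open>finite V\<close> by (auto intro: finite_subset[of _ "Pow V"])
  have ne: "f ` {S. S \<subseteq> V \<and> card S \<le> k} \<noteq> {}" by auto
  show ?thesis using Max_in[OF fin ne] unfolding OPT_def by auto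
qed

context
  fixes V :: "'a set" and f :: "'a set \<Rightarrow> real"
  assumes mono: "monotone_fn V f" and sub: "submodular V f"
begin

lemma monoD: "A \<subseteq> B \<Longrightarrow> B \<subseteq> V \<Longrightarrow> f A \<le> f B"
  using mono unfolding monotone_fn_def by blast

lemma subD: "A \<subseteq> V \<Longrightarrow> B \<subseteq> V \<Longrightarrow> f (A \<union> B) + f (A \<inter> B) \<le> f A + f B"
  using sub unfolding submodular_def by blast

lemma dimin: "T \<subseteq> R \<Longrightarrow> R \<subseteq> V \<Longrightarrow> e \<in> V \<Longrightarrow> f (insert e R) - f R \<le> f (insert e T) - f T"
proof (cases "e \<in> R")
  case True
  assume h: "T \<subseteq> R" "R \<subseteq> V" "e \<in> V"
  have "f T \<le> f (insert e T)" using h by (intro monoD) auto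
  then show ?thesis using True by (simp add: insert_absorb)
next
  case False
  assume h: "T \<subseteq> R" "R \<subseteq> V" "e \<in> V"
  have u: "insert e T \<union> R = insert e R" using h by auto
  have i: "insert e T \<inter> R = T" using h False by auto
  have "f (insert e T \<union> R) + f (insert e T \<inter> R) \<le> f (insert e T) + f R"
    using h by (intro subD) auto
  then show ?thesis unfolding u i by linarith
qed

lemma chain_upper: "finite X \<Longrightarrow> X \<subseteq> V \<Longrightarrow> Y \<subseteq> V \<Longrightarrow>
   f (X \<union> Y) - f Y \<le> (\<Sum>x\<in>X. f (insert x Y) - f Y)"
proof (induction X rule: finite_induct)
  case empty then show ?case by simp
next
  case (insert x X)
  have "f (insert x (X \<union> Y)) - f (X \<union> Y) \<le> f (insert x Y) - f Y"
    using insert.prems by (intro dimin) auto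
  then show ?case using insert by simp
qed

lemma marg_mono: "B \<subseteq> B' \<Longrightarrow> B' \<subseteq> V \<Longrightarrow> W \<subseteq> V \<Longrightarrow> f (B' \<union> W) - f B' \<le> f (B \<union> W) - f B"
proof -
  assume h: "B \<subseteq> B'" "B' \<subseteq> V" "W \<subseteq> V"
  have u: "(B \<union> W) \<union> B' = B' \<union> W" using h by auto
  have "f ((B \<union> W) \<union> B') + f ((B \<union> W) \<inter> B') \<le> f (B \<union> W) + f B'"
    using h by (intro subD) auto
  moreover have "f B \<le> f ((B \<union> W) \<inter> B')" using h by (intro monoD) auto
  ultimately show ?thesis unfolding u by linarith
qed

lemma weights: "finite Q \<Longrightarrow> Q \<subseteq> V \<Longrightarrow> B \<subseteq> V \<Longrightarrow>
  \<exists>w. (\<forall>x. w x \<ge> 0) \<and> (\<Sum>x\<in>Q. w x) = f (B \<union> Q) - f B \<and>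
      (\<forall>W. W \<subseteq> Q \<longrightarrow> (\<Sum>x\<in>W. w x) \<le> f (B \<union> W) - f B)"
proof (induction Q arbitrary: B rule: finite_induct)
  case empty
  show ?case by (rule exI[of _ "\<lambda>_. 0"]) simp
next
  case (insert x Q)
  obtain w where w: "\<forall>x. w x \<ge> 0" "(\<Sum>x\<in>Q. w x) = f (insert x B \<union> Q) - f (insert x B)"
      "\<forall>W. W \<subseteq> Q \<longrightarrow> (\<Sum>x\<in>W. w x) \<le> f (insert x B \<union> W) - f (insert x B)"
    using insert.IH[of "insert x B"] insert.prems by auto
  define w' where "w' = w(x := f (insert x B) - f B)"
  have mx: "f B \<le> f (insert x B)" using insert.prems by (intro monoD) auto
  have eqO: "(\<Sum>y\<in>W. w' y) = (\<Sum>y\<in>W. w y)" if "W \<subseteq> Q" for W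
    using that insert.hyps(2) by (intro sum.cong) (auto simp: w'_def)
  have p1: "\<forall>y. w' y \<ge> 0" using w(1) mx by (simp add: w'_def)
  have p2: "(\<Sum>y\<in>insert x Q. w' y) = f (B \<union> insert x Q) - f B"
    using insert.hyps eqO[of Q] w(2) by (simp add: w'_def)
  have p3: "(\<Sum>y\<in>W. w' y) \<le> f (B \<union> W) - f B" if W: "W \<subseteq> insert x Q" for W
  proof (cases "x \<in> W")
    case True
    have W': "W - {x} \<subseteq> Q" using W by auto
    have fin: "finite W" using W insert.hyps(1) finite_subset by blast
    have "(\<Sum>y\<in>W. w' y) = w' x + (\<Sum>y\<in>W - {x}. w' y)"
      using True fin by (simp add: sum.remove)
    also have "\<dots> = (f (insert x B) - f B) + (\<Sum>y\<in>W - {x}. w y)"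
      using eqO[OF W'] by (simp add: w'_def)
    also have "\<dots> \<le> (f (insert x B) - f B) + (f (insert x B \<union> (W - {x})) - f (insert x B))"
      using w(3) W' by (intro add_left_mono) blast
    also have "insert x B \<union> (W - {x}) = B \<union> W" using True by auto
    finally show ?thesis by simp
  next
    case False
    then have W': "W \<subseteq> Q" using W by auto
    have "(\<Sum>y\<in>W. w' y) = (\<Sum>y\<in>W. w y)" using eqO[OF W'] .
    also have "\<dots> \<le> f (insert x B \<union> W) - f (insert x B)" using w(3) W' by auto
    also have "\<dots> \<le> f (B \<union> W) - f B"
      using insert.prems W' by (intro marg_mono) auto
    finally show ?thesis .
  qed
  show ?case using p1 p2 p3 by blast
qed

end


lemma mem_transpose_image: "(x \<in> Transposition.transpose a b ` X) = (Transposition.transpose a b x \<in> X)"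
  by (metis image_iff transpose_involutory)

lemma perm_sym:
  assumes "\<sigma> permutes V"
  shows "(\<Sum>xs\<in>permutations_of_set V. G (set (drop m xs))) =
         (\<Sum>xs\<in>permutations_of_set V. G (\<sigma> ` set (drop m xs)))"
proof -
  have inj: "inj_on (map \<sigma>) (permutations_of_set V)"
    using permutes_inj[OF assms] by (auto intro: inj_on_subset[OF inj_mapI])
  have "(\<Sum>xs\<in>permutations_of_set V. G (set (drop m xs))) =
        (\<Sum>xs\<in>map \<sigma> ` permutations_of_set V. G (set (drop m xs)))"
    by (simp add: permutations_of_set_image_permutes[OF assms])
  also have "\<dots> = (\<Sum>xs\<in>permutations_of_set V. G (set (drop m (map \<sigma> xs))))"
    by (subst sum.reindex[OF inj]) simp
  also have "\<dots> = (\<Sum>xs\<in>permutations_of_set V. G (\<sigma> ` set (drop m xs)))"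
    by (simp add: drop_map)
  finally show ?thesis .
qed

definition N1 :: "'a set \<Rightarrow> nat \<Rightarrow> 'a \<Rightarrow> real" where
  "N1 V m e = (\<Sum>xs\<in>permutations_of_set V. if e \<in> set (drop m xs) then 1 else 0)"

definition N2 :: "'a set \<Rightarrow> nat \<Rightarrow> 'a \<Rightarrow> 'a \<Rightarrow> real" where
  "N2 V m e e' = (\<Sum>xs\<in>permutations_of_set V. if e \<in> set (drop m xs) \<and> e' \<in> set (drop m xs) then 1 else 0)"

lemma card_drop_perm: "xs \<in> permutations_of_set V \<Longrightarrow> card (set (drop m xs)) = card V - m"
  by (metis distinct_card distinct_drop length_drop length_finite_permutations_of_set permutations_of_setD(2))

lemma drop_sub: "xs \<in> permutations_of_set V \<Longrightarrow> set (drop m xs) \<subseteq> V"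
  by (metis permutations_of_setD(1) set_drop_subset)

lemma sum_ind: "finite A \<Longrightarrow> (\<Sum>e\<in>A. if e \<in> X then (1::real) else 0) = real (card (A \<inter> X))"
  by (simp add: sum.If_cases Int_def)

lemma N1_eq: assumes "e \<in> V" "e' \<in> V" shows "N1 V m e = N1 V m e'"
proof -
  have "N1 V m e = (\<Sum>xs\<in>permutations_of_set V. (\<lambda>X. if e \<in> X then 1 else 0)
           (Transposition.transpose e e' ` set (drop m xs)))"
    unfolding N1_def by (rule perm_sym[OF permutes_swap_id[OF assms]])
  also have "\<dots> = N1 V m e'"
    unfolding N1_def mem_transpose_image by simp
  finally show ?thesis .
qed

lemma sum_N1: assumes "finite V" shows "(\<Sum>e\<in>V. N1 V m e) = real (card (permutations_of_set V)) * real (card V - m)"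
proof -
  have "(\<Sum>e\<in>V. N1 V m e) = (\<Sum>xs\<in>permutations_of_set V. \<Sum>e\<in>V. if e \<in> set (drop m xs) then 1 else 0)"
    unfolding N1_def by (rule sum.swap)
  also have "\<dots> = (\<Sum>xs\<in>permutations_of_set V. real (card V - m))"
  proof (rule sum.cong)
    fix xs assume xs: "xs \<in> permutations_of_set V"
    have "V \<inter> set (drop m xs) = set (drop m xs)" using drop_sub[OF xs] by auto
    then show "(\<Sum>e\<in>V. if e \<in> set (drop m xs) then 1 else 0) = real (card V - m)"
      using sum_ind[OF assms] card_drop_perm[OF xs] by simp
  qed simp
  finally show ?thesis by simp
qed

lemma N1_val: assumes "finite V" "e \<in> V"
  shows "N1 V m e * real (card V) = real (card (permutations_of_set V)) * real (card V - m)"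
proof -
  have "(\<Sum>e'\<in>V. N1 V m e') = (\<Sum>e'\<in>V. N1 V m e)"
    using N1_eq assms(2) by (intro sum.cong) auto
  then show ?thesis using sum_N1[OF assms(1), of m] by (simp add: mult.commute)
qed

lemma N2_eq: assumes "e \<in> V" "e' \<in> V - {e}" "e'' \<in> V - {e}" shows "N2 V m e e' = N2 V m e e''"
proof -
  have "N2 V m e e' = (\<Sum>xs\<in>permutations_of_set V. (\<lambda>X. if e \<in> X \<and> e' \<in> X then 1 else 0)
           (Transposition.transpose e' e'' ` set (drop m xs)))"
    unfolding N2_def by (rule perm_sym) (use assms in \<open>auto intro: permutes_swap_id\<close>)
  also have "\<dots> = N2 V m e e''"
  proof -
    have te: "Transposition.transpose e' e'' e = e" using assms by (intro transpose_apply_other) auto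
    show ?thesis unfolding N2_def mem_transpose_image te by simp
  qed
  finally show ?thesis .
qed

lemma sum_N2: assumes "finite V" "e \<in> V"
  shows "(\<Sum>e'\<in>V - {e}. N2 V m e e') = N1 V m e * real (card V - m - 1)"
proof -
  have "(\<Sum>e'\<in>V - {e}. N2 V m e e') =
      (\<Sum>xs\<in>permutations_of_set V. \<Sum>e'\<in>V - {e}. if e \<in> set (drop m xs) \<and> e' \<in> set (drop m xs) then 1 else 0)"
    unfolding N2_def by (rule sum.swap)
  also have "\<dots> = (\<Sum>xs\<in>permutations_of_set V. (if e \<in> set (drop m xs) then 1 else 0) * real (card V - m - 1))"
  proof (rule sum.cong)
    fix xs assume xs: "xs \<in> permutations_of_set V"
    show "(\<Sum>e'\<in>V - {e}. if e \<in> set (drop m xs) \<and> e' \<in> set (drop m xs) then 1 else 0) =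
          (if e \<in> set (drop m xs) then 1 else 0) * real (card V - m - 1)"
    proof (cases "e \<in> set (drop m xs)")
      case True
      have "(V - {e}) \<inter> set (drop m xs) = set (drop m xs) - {e}" using drop_sub[OF xs] by auto
      moreover have "card (set (drop m xs) - {e}) = card V - m - 1"
        using True card_drop_perm[OF xs] by simp
      ultimately show ?thesis using True sum_ind[of "V - {e}" "set (drop m xs)"] assms(1) by simp
    qed simp
  qed simp
  also have "\<dots> = N1 V m e * real (card V - m - 1)"
    unfolding N1_def by (simp add: sum_distrib_right)
  finally show ?thesis .
qed

lemma N2_val: assumes "finite V" "e \<in> V" "e' \<in> V" "e' \<noteq> e"
  shows "N2 V m e e' * real (card V - 1) = N1 V m e * real (card V - m - 1)"
proof -
  have "(\<Sum>e''\<in>V - {e}. N2 V m e e'') = (\<Sum>e''\<in>V - {e}. N2 V m e e')"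
  proof (rule sum.cong)
    fix x assume "x \<in> V - {e}"
    then show "N2 V m e x = N2 V m e e'" using N2_eq[of e V x e' m] assms by auto
  qed simp
  then show ?thesis using sum_N2[OF assms(1,2), of m] assms by (simp add: mult.commute)
qed



lemma markov_count:
  assumes "finite A" "\<forall>x\<in>A. \<phi> x \<ge> 0" "t > 0"
  shows "real (card {x\<in>A. \<phi> x \<ge> t}) * t \<le> (\<Sum>x\<in>A. \<phi> x)"
proof -
  have "real (card {x\<in>A. \<phi> x \<ge> t}) * t = (\<Sum>x\<in>{x\<in>A. \<phi> x \<ge> t}. t)" by simp
  also have "\<dots> \<le> (\<Sum>x\<in>{x\<in>A. \<phi> x \<ge> t}. \<phi> x)" by (rule sum_mono) auto
  also have "\<dots> \<le> (\<Sum>x\<in>A. \<phi> x)" using assms by (intro sum_mono2) auto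
  finally show ?thesis .
qed

definition ZL :: "nat \<Rightarrow> ('a \<Rightarrow> real) \<Rightarrow> 'a set \<Rightarrow> 'a list \<Rightarrow> real" where
  "ZL m c Q xs = (\<Sum>u\<in>Q. if u \<in> set (drop m xs) then c u else 0)"

context
  fixes V :: "'a set" and m :: nat
  assumes finV: "finite V" and n2: "card V \<ge> 2" and mn: "m \<le> card V"
begin

definition "pL = real (card V - m) / real (card V)"
definition "rL = pL * real (card V - m - 1) / real (card V - 1)"
definition "cP = real (card (permutations_of_set V))"

lemma N1v: "e \<in> V \<Longrightarrow> N1 V m e = cP * pL"
  using N1_val[OF finV, of e m] n2 unfolding cP_def pL_def by (simp add: field_simps)

lemma N2v: "e \<in> V \<Longrightarrow> e' \<in> V \<Longrightarrow> e' \<noteq> e \<Longrightarrow> N2 V m e e' = cP * rL"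
proof -
  assume h: "e \<in> V" "e' \<in> V" "e' \<noteq> e"
  have "card V - 1 > 0" using n2 by simp
  then have "real (card V - 1) > 0" by simp
  then show ?thesis using N2_val[OF finV h, of m] N1v[OF h(1)] unfolding rL_def
    by (simp add: field_simps)
qed

lemma rL_le: "rL \<le> pL * pL" and rL_ge: "rL \<ge> 0" and pL_ge: "pL \<ge> 0"
proof -
  have n: "real (card V) > 0" "real (card V - 1) > 0" using n2 by auto
  have "real (card V - m - 1) * real (card V) \<le> real (card V - m) * real (card V - 1)"
  proof -
    have "(card V - m - 1) * card V \<le> (card V - m) * (card V - 1)"
    proof (cases "card V - m \<ge> 1")
      case True
      have "(card V - m - 1) * card V = (card V - m) * card V - card V" by (simp add: diff_mult_distrib)
      also have "\<dots> \<le> (card V - m) * card V - (card V - m)" by simp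
      also have "\<dots> = (card V - m) * (card V - 1)" by (simp add: diff_mult_distrib2)
      finally show ?thesis .
    qed simp
    then show ?thesis by (metis of_nat_le_iff of_nat_mult)
  qed
  then have "real (card V - m - 1) / real (card V - 1) \<le> real (card V - m) / real (card V)"
    using n by (simp add: field_simps)
  moreover have "pL \<ge> 0" unfolding pL_def by simp
  ultimately show "rL \<le> pL * pL" unfolding rL_def pL_def[symmetric]
    by (metis mult_left_mono times_divide_eq_right)
  show "rL \<ge> 0" unfolding rL_def pL_def by simp
  show "pL \<ge> 0" unfolding pL_def by simp
qed

lemma first_moment: assumes "Q \<subseteq> V"
  shows "(\<Sum>xs\<in>permutations_of_set V. ZL m c Q xs) = cP * pL * (\<Sum>u\<in>Q. c u)"
proof -
  have fQ: "finite Q" using assms finV finite_subset by blast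
  have "(\<Sum>xs\<in>permutations_of_set V. ZL m c Q xs) =
        (\<Sum>u\<in>Q. \<Sum>xs\<in>permutations_of_set V. if u \<in> set (drop m xs) then c u else 0)"
    unfolding ZL_def by (rule sum.swap)
  also have "\<dots> = (\<Sum>u\<in>Q. c u * N1 V m u)"
    unfolding N1_def by (intro sum.cong refl) (simp add: sum_distrib_left if_distrib cong: if_cong)
  also have "\<dots> = (\<Sum>u\<in>Q. c u * (cP * pL))"
    using assms by (intro sum.cong refl) (auto simp: N1v)
  finally show ?thesis by (simp add: sum_distrib_right mult.commute)
qed

lemma second_moment: assumes "Q \<subseteq> V"
  shows "(\<Sum>xs\<in>permutations_of_set V. (ZL m c Q xs)^2) =
     cP * (pL * (\<Sum>u\<in>Q. (c u)^2) + rL * ((\<Sum>u\<in>Q. c u)^2 - (\<Sum>u\<in>Q. (c u)^2)))"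
proof -
  have fQ: "finite Q" using assms finV finite_subset by blast
  define I where "I xs u = (if (u::'a) \<in> set (drop m xs) then (1::real) else 0)" for xs u
  have Z: "ZL m c Q xs = (\<Sum>u\<in>Q. c u * I xs u)" for xs
    unfolding ZL_def I_def by (intro sum.cong) auto
  have sq: "(ZL m c Q xs)^2 = (\<Sum>u\<in>Q. \<Sum>u'\<in>Q. c u * c u' * (I xs u * I xs u'))" for xs
    unfolding Z power2_eq_square sum_product by (intro sum.cong refl) (simp add: algebra_simps)
  have NN: "(\<Sum>xs\<in>permutations_of_set V. I xs u * I xs u') = (if u = u' then cP * pL else cP * rL)"
    if "u \<in> Q" "u' \<in> Q" for u u'
  proof (cases "u = u'")
    case True
    then have "(\<Sum>xs\<in>permutations_of_set V. I xs u * I xs u') = N1 V m u"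
      unfolding N1_def I_def by (intro sum.cong) auto
    then show ?thesis using N1v that assms True by auto
  next
    case False
    then have "(\<Sum>xs\<in>permutations_of_set V. I xs u * I xs u') = N2 V m u u'"
      unfolding N2_def I_def by (intro sum.cong) auto
    then show ?thesis using N2v that assms False by auto
  qed
  have "(\<Sum>xs\<in>permutations_of_set V. (ZL m c Q xs)^2) =
        (\<Sum>u\<in>Q. \<Sum>u'\<in>Q. c u * c u' * (\<Sum>xs\<in>permutations_of_set V. I xs u * I xs u'))"
    unfolding sq by (simp add: sum.swap[of _ "permutations_of_set V"] sum_distrib_left)
  also have "\<dots> = (\<Sum>u\<in>Q. \<Sum>u'\<in>Q. c u * c u' * (if u = u' then cP * pL else cP * rL))"
    using NN by (intro sum.cong refl) auto
  also have "\<dots> = (\<Sum>u\<in>Q. c u * (c u * cP * pL + cP * rL * ((\<Sum>u'\<in>Q. c u') - c u)))"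
  proof (intro sum.cong refl)
    fix u assume u: "u \<in> Q"
    have "(\<Sum>u'\<in>Q. c u * c u' * (if u = u' then cP * pL else cP * rL)) =
          c u * c u * (cP * pL) + (\<Sum>u'\<in>Q - {u}. c u * c u' * (cP * rL))"
    proof -
      have "(\<Sum>u'\<in>Q - {u}. c u * c u' * (if u = u' then cP * pL else cP * rL)) =
            (\<Sum>u'\<in>Q - {u}. c u * c u' * (cP * rL))" by (intro sum.cong) auto
      then show ?thesis using u fQ by (simp add: sum.remove)
    qed
    also have "(\<Sum>u'\<in>Q - {u}. c u * c u' * (cP * rL)) = c u * cP * rL * ((\<Sum>u'\<in>Q. c u') - c u)"
    proof -
      have "(\<Sum>u'\<in>Q - {u}. c u * c u' * (cP * rL)) = (c u * cP * rL) * (\<Sum>u'\<in>Q - {u}. c u')"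
        by (simp add: sum_distrib_left algebra_simps)
      also have "(\<Sum>u'\<in>Q - {u}. c u') = (\<Sum>u'\<in>Q. c u') - c u" using u fQ by (simp add: sum_diff1)
      finally show ?thesis .
    qed
    finally show "(\<Sum>u'\<in>Q. c u * c u' * (if u = u' then cP * pL else cP * rL)) =
          c u * (c u * cP * pL + cP * rL * ((\<Sum>u'\<in>Q. c u') - c u))" by (simp add: algebra_simps)
  qed
  also have "\<dots> = cP * (pL * (\<Sum>u\<in>Q. (c u)^2) + rL * ((\<Sum>u\<in>Q. c u)^2 - (\<Sum>u\<in>Q. (c u)^2)))"
    by (simp add: algebra_simps power2_eq_square sum.distrib sum_subtractf sum_distrib_left sum_distrib_right)
  finally show ?thesis .
qed

lemma variance_bound: assumes "Q \<subseteq> V"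
  shows "(\<Sum>xs\<in>permutations_of_set V. (ZL m c Q xs - pL * (\<Sum>u\<in>Q. c u))^2) \<le>
      cP * pL * (\<Sum>u\<in>Q. (c u)^2)"
proof -
  define S1 where "S1 = (\<Sum>u\<in>Q. c u)"
  define S2 where "S2 = (\<Sum>u\<in>Q. (c u)^2)"
  have S2: "S2 \<ge> 0" unfolding S2_def by (simp add: sum_nonneg)
  have "(\<Sum>xs\<in>permutations_of_set V. (ZL m c Q xs - pL * S1)^2) =
        (\<Sum>xs\<in>permutations_of_set V. (ZL m c Q xs)^2) - 2 * (pL * S1) * (\<Sum>xs\<in>permutations_of_set V. ZL m c Q xs)
         + cP * (pL * S1)^2"
  proof -
    have "(\<Sum>xs\<in>permutations_of_set V. (ZL m c Q xs - pL * S1)^2) =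
          (\<Sum>xs\<in>permutations_of_set V. (ZL m c Q xs)^2 - (2 * (pL * S1)) * ZL m c Q xs + (pL * S1)^2)"
      by (intro sum.cong refl) (simp add: power2_diff algebra_simps)
    also have "\<dots> = (\<Sum>xs\<in>permutations_of_set V. (ZL m c Q xs)^2) - (\<Sum>xs\<in>permutations_of_set V. (2 * (pL * S1)) * ZL m c Q xs)
           + (\<Sum>xs\<in>permutations_of_set V. (pL * S1)^2)"
      by (simp only: sum.distrib sum_subtractf)
    also have "(\<Sum>xs\<in>permutations_of_set V. (2 * (pL * S1)) * ZL m c Q xs) = 2 * (pL * S1) * (\<Sum>xs\<in>permutations_of_set V. ZL m c Q xs)"
      by (rule sum_distrib_left[symmetric])
    also have "(\<Sum>xs\<in>permutations_of_set V. (pL * S1)^2) = cP * (pL * S1)^2"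
      unfolding cP_def by simp
    finally show ?thesis .
  qed
  also have "\<dots> = cP * (pL * S2 + rL * (S1^2 - S2)) - 2 * (pL * S1) * (cP * pL * S1) + cP * (pL * S1)^2"
    using second_moment[OF assms, of c] first_moment[OF assms, of c] unfolding S1_def S2_def by simp
  also have "\<dots> = cP * (pL * S2 + (rL - pL*pL) * S1^2 - rL * S2)" by (simp add: algebra_simps power2_eq_square)
  also have "\<dots> \<le> cP * (pL * S2)"
  proof -
    have c: "cP \<ge> 0" unfolding cP_def by simp
    have "(rL - pL*pL) * S1^2 \<le> 0" using rL_le by (simp add: mult_nonpos_nonneg)
    moreover have "rL * S2 \<ge> 0" using rL_ge S2 by simp
    ultimately show ?thesis using c by (intro mult_left_mono) auto
  qed
  finally show ?thesis unfolding S1_def S2_def by (simp add: mult.assoc)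
qed

end


lemma thr1: "j \<le> 9*n div 10 \<Longrightarrow> thr W k n j = 100/real k * W"
proof -
  assume "j \<le> 9*n div 10"
  moreover have "9*n div 10 * 10 \<le> 9*n" by simp
  ultimately have "10 * j \<le> 9 * n" by linarith
  then have "real (10 * j) \<le> real (9 * n)" by (simp only: of_nat_le_iff)
  then have "real j \<le> 9/10 * real n" by simp
  then show ?thesis unfolding thr_def by simp
qed

lemma thr2: "j > 9*n div 10 \<Longrightarrow> thr W k n j = 1/(10*real k) * W"
proof -
  assume "j > 9*n div 10"
  moreover have "9*n div 10 * 10 + 9*n mod 10 = 9*n" by simp
  moreover have "9*n mod 10 < 10" by simp
  ultimately have "10 * j > 9 * n" by linarith
  then have "real (10 * j) > real (9 * n)" by (simp only: of_nat_less_iff)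
  then have "\<not> real j \<le> 9/10 * real n" by simp
  then show ?thesis unfolding thr_def by simp
qed

context
  fixes V :: "'a set" and f :: "'a set \<Rightarrow> real"
  assumes mono: "monotone_fn V f" and sub: "submodular V f"
begin

lemma det:
  fixes k :: nat and W :: real and xs :: "'a list"
  assumes finV: "finite V" and Wpos: "W > 0" and kbig: "real k \<ge> 2 * 10^8" and kn: "k \<le> card V" and f0: "f {} = 0"
    and optb: "\<forall>S. S \<subseteq> V \<longrightarrow> card S \<le> k \<longrightarrow> f S \<le> W"
    and xsP: "xs \<in> permutations_of_set V"
    and DV: "D \<subseteq> V" and Dcard: "real (card D) \<le> 5/100000 * real k" and fD: "f D \<ge> 495/1000 * W"
    and OsV: "Os \<subseteq> V" and Oscard: "card Os \<le> k" and fOs: "f Os = W"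
    and Qdef: "Q = Os - D"
    and h0: "\<forall>x. h x \<ge> 0" and hsum: "(\<Sum>x\<in>D. h x) = f D" and hle: "\<forall>Y. Y \<subseteq> D \<longrightarrow> (\<Sum>x\<in>Y. h x) \<le> f Y"
    and g0: "\<forall>x. g x \<ge> 0" and gsum: "(\<Sum>x\<in>Q. g x) = f (D \<union> Q) - f D"
    and gle: "\<forall>Y. Y \<subseteq> Q \<longrightarrow> (\<Sum>x\<in>Y. g x) \<le> f (D \<union> Y) - f D"
    and Hdef: "H = {x\<in>Q. g x \<ge> 10000 * W / real k}"
    and mdef: "m = 9 * card V div 10"
    and E1: "ZL m h D xs \<le> f D - 41/100 * W"
    and E2: "ZL m (\<lambda>x. g x - 1/(10*real k) * W) (Q - H) xs \<ge>
              real (card V - m) / real (card V) * (\<Sum>x\<in>Q - H. g x - 1/(10*real k) * W) - W/100"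
  shows "f (algorithm1 f W k xs) \<ge> 50025 / 100000 * W"
proof -
  define n where "n = card V"
  define \<tau>1 where "\<tau>1 = 100/real k * W"
  define \<tau>2 where "\<tau>2 = 1/(10*real k) * W"
  have kpos: "real k > 0" using kbig by simp
  have t1pos: "\<tau>1 > 0" and t2pos: "\<tau>2 > 0" using kpos Wpos unfolding \<tau>1_def \<tau>2_def by auto
  have len: "length xs = n" using xsP n_def by (simp add: length_finite_permutations_of_set)
  have mn: "m \<le> n" using mdef n_def by simp
  have setxs: "set xs = V" and dist: "distinct xs" using permutations_of_setD[OF xsP] by auto
  define T where "T = set (take m xs)"
  define L where "L = set (drop m xs)"
  have TL: "T \<union> L = V" unfolding T_def L_def using setxs by (metis set_append append_take_drop_id)
  have TLd: "T \<inter> L = {}" unfolding T_def L_def using dist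
    by (metis append_take_drop_id distinct_append)
  define S1 where "S1 = alg1_aux f W k n 1 (take m xs) {}"
  define S where "S = alg1_aux f W k n (1 + m) (drop m xs) S1"
  have lt: "length (take m xs) = m" using len mn by simp
  have alg: "algorithm1 f W k xs = S"
    unfolding algorithm1_def S_def S1_def len
    by (metis alg_append append_take_drop_id lt)
  have thrT: "\<forall>j. 1 \<le> j \<longrightarrow> j < 1 + length (take m xs) \<longrightarrow> thr W k n j = \<tau>1"
    using lt thr1 mdef n_def unfolding \<tau>1_def by auto
  have thrL: "\<forall>j. 1 + m \<le> j \<longrightarrow> j < 1 + m + length (drop m xs) \<longrightarrow> thr W k n j = \<tau>2"
    using thr2 mdef n_def unfolding \<tau>2_def by auto
  have S1sub: "S1 \<subseteq> T" using alg_sub[of "{}" f W k n 1 "take m xs"] unfolding S1_def T_def by auto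
  have SS1: "S1 \<subseteq> S" and SsubL: "S \<subseteq> S1 \<union> L"
    using alg_sub[of S1 f W k n "1+m" "drop m xs"] unfolding S_def L_def by auto
  have SV: "S \<subseteq> V" using SS1 SsubL S1sub TL by auto
  have S1V: "S1 \<subseteq> V" using S1sub TL by auto
  have cS1: "finite S1" "card S1 \<le> k" using alg_card[of "{}" k f W n 1 "take m xs"] unfolding S1_def by auto
  have cS: "finite S" "card S \<le> k" using alg_card[OF cS1, of f W n "1+m" "drop m xs"] unfolding S_def by auto
  have gain1: "f S1 - f {} \<ge> (real (card S1) - real (card {})) * \<tau>1"
    unfolding S1_def using alg_gain[OF thrT less_imp_le[OF t1pos] finite.emptyI] by simp

  have fS1W: "f S1 \<le> W" using optb S1V cS1 by auto
  have cS1k: "real (card S1) * 100 \<le> real k"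
  proof -
    have "real (card S1) * \<tau>1 \<le> W" using gain1 fS1W f0 by simp
    then have "real (card S1) * (100 * W) \<le> W * real k" using kpos unfolding \<tau>1_def by (simp add: field_simps)
    then have "(real (card S1) * 100) * W \<le> real k * W" by (simp add: algebra_simps)
    then show ?thesis using Wpos by (simp add: mult_le_cancel_right)
  qed
  have cS1lt: "card S1 < k" using cS1k kpos by linarith
  have eV: "e \<in> V" if "e \<in> T \<or> e \<in> L" for e using that TL by auto
  have m1: "f (insert e S1) - f S1 \<le> \<tau>1" if eT: "e \<in> T" for e
  proof (cases "e \<in> S1")
    case True then show ?thesis using t1pos by (simp add: insert_absorb)
  next
    case False
    obtain T' where T': "{} \<subseteq> T'" "T' \<subseteq> S1" "\<not> (card T' < k \<and> f (insert e T') - f T' \<ge> \<tau>1)"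
      using alg_reject[OF thrT, of e f "{}"] eT False unfolding T_def S1_def by auto
    have "card T' \<le> card S1" using T'(2) cS1(1) by (rule card_mono[rotated])
    then have "f (insert e T') - f T' < \<tau>1" using T'(3) cS1lt by auto
    moreover have "f (insert e S1) - f S1 \<le> f (insert e T') - f T'"
      using dimin[OF mono sub T'(2) S1V eV] eT by auto
    ultimately show ?thesis by simp
  qed
  have m1S: "f (insert e S) - f S \<le> \<tau>1" if eT: "e \<in> T" for e
    using dimin[OF mono sub SS1 SV eV] m1[OF eT] eT by fastforce
  have hsplit: "(\<Sum>x\<in>D \<inter> T. h x) = f D - ZL m h D xs"
  proof -
    have fD': "finite D" using DV finV finite_subset by blast
    have "ZL m h D xs = (\<Sum>x\<in>D \<inter> L. h x)" unfolding ZL_def L_def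
      using fD' by (simp add: sum.inter_filter[symmetric] Int_def)
    moreover have "(\<Sum>x\<in>D. h x) = (\<Sum>x\<in>D \<inter> T. h x) + (\<Sum>x\<in>D \<inter> L. h x)"
    proof -
      have "D = (D \<inter> T) \<union> (D \<inter> L)" using DV TL by auto
      then have "(\<Sum>x\<in>D. h x) = (\<Sum>x\<in>(D \<inter> T) \<union> (D \<inter> L). h x)" by simp
      also have "\<dots> = (\<Sum>x\<in>D \<inter> T. h x) + (\<Sum>x\<in>D \<inter> L. h x)"
        using fD' TLd by (intro sum.union_disjoint) auto
      finally show ?thesis .
    qed
    ultimately show ?thesis using hsum by simp
  qed
  have fDT: "f (D \<inter> T) \<ge> f D - ZL m h D xs" using hle[rule_format, of "D \<inter> T"] hsplit by auto
  have Dt1: "real (card D) * \<tau>1 \<le> 5/1000 * W"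
  proof -
    have "real (card D) * \<tau>1 \<le> (5/100000 * real k) * \<tau>1" using Dcard t1pos by (intro mult_right_mono) auto
    also have "\<dots> = 5/1000 * W" unfolding \<tau>1_def using kpos by (simp add: field_simps)
    finally show ?thesis .
  qed
  have fDV: "finite D" using DV finV finite_subset by blast
  show ?thesis
  proof (cases "card S < k")
    case False
    then have cSk: "card S = k" using cS by simp
    have gain2: "f S - f S1 \<ge> (real (card S) - real (card S1)) * \<tau>2"
      unfolding S_def using alg_gain[OF thrL less_imp_le[OF t2pos] cS1(1)] by simp
    have g2: "(real (card S) - real (card S1)) * \<tau>2 \<ge> 99/1000 * W"
    proof -
      have "real (card S) - real (card S1) \<ge> 99/100 * real k" using cSk cS1k by simp
      then have "(real (card S) - real (card S1)) * \<tau>2 \<ge> (99/100 * real k) * \<tau>2"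
        using t2pos by (intro mult_right_mono) auto
      moreover have "(99/100 * real k) * \<tau>2 = 99/1000 * W" unfolding \<tau>2_def using kpos by (simp add: field_simps)
      ultimately show ?thesis by linarith
    qed
    have ch: "f ((D \<inter> T) \<union> S1) - f S1 \<le> (\<Sum>x\<in>D \<inter> T. f (insert x S1) - f S1)"
      using chain_upper[OF mono sub, of "D \<inter> T" S1] fDV DV S1V by auto
    also have "\<dots> \<le> (\<Sum>x\<in>D \<inter> T. \<tau>1)" using m1 by (intro sum_mono) auto
    also have "\<dots> = real (card (D \<inter> T)) * \<tau>1" by simp
    also have "\<dots> \<le> real (card D) * \<tau>1" using fDV t1pos by (intro mult_right_mono) (auto intro: card_mono)
    finally have ch2: "f ((D \<inter> T) \<union> S1) - f S1 \<le> real (card D) * \<tau>1" .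
    have "f (D \<inter> T) \<le> f ((D \<inter> T) \<union> S1)" using DV S1V by (intro monoD[OF mono sub]) auto
    then show ?thesis unfolding alg using ch2 Dt1 fDT E1 gain2 g2 Wpos by linarith
  next
    case True
    have rej2: "f (insert e S) - f S \<le> \<tau>2" if eL: "e \<in> L" for e
    proof (cases "e \<in> S")
      case True then show ?thesis using t2pos by (simp add: insert_absorb)
    next
      case False
      obtain T' where T': "S1 \<subseteq> T'" "T' \<subseteq> S" "\<not> (card T' < k \<and> f (insert e T') - f T' \<ge> \<tau>2)"
        using alg_reject[OF thrL, of e f S1] eL False unfolding L_def S_def by auto
      have "card T' \<le> card S" using T'(2) cS(1) by (rule card_mono[rotated])
      then have "f (insert e T') - f T' < \<tau>2" using T'(3) True by auto
      moreover have "f (insert e S) - f S \<le> f (insert e T') - f T'"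
        using dimin[OF mono sub T'(2) SV eV] eL by auto
      ultimately show ?thesis by simp
    qed
    have QV: "Q \<subseteq> V" using Qdef OsV by auto
    have fQ: "finite Q" using QV finV finite_subset by blast
    have HQ: "H \<subseteq> Q" using Hdef by auto
    have fH: "finite H" using HQ fQ finite_subset by blast
    define X where "X = (D \<union> H) \<inter> T"
    define Y where "Y = (D \<union> Q) \<inter> L"
    define R where "R = (Q - H) \<inter> L"
    have fX: "finite X" "finite Y" "finite R" unfolding X_def Y_def R_def using fDV fH fQ by auto
    have XYd: "X \<inter> Y = {}" unfolding X_def Y_def using TLd by auto
    have XYV: "X \<union> Y \<subseteq> V" unfolding X_def Y_def using DV QV TL by auto
    have up: "f ((X \<union> Y) \<union> S) - f S \<le> (\<Sum>x\<in>X \<union> Y. f (insert x S) - f S)"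
      using chain_upper[OF mono sub, of "X \<union> Y" S] fX XYV SV by auto
    also have "\<dots> = (\<Sum>x\<in>X. f (insert x S) - f S) + (\<Sum>x\<in>Y. f (insert x S) - f S)"
      using fX XYd by (intro sum.union_disjoint) auto
    also have "\<dots> \<le> (\<Sum>x\<in>X. \<tau>1) + (\<Sum>x\<in>Y. \<tau>2)"
      using m1S rej2 unfolding X_def Y_def by (intro add_mono sum_mono) auto
    also have "\<dots> = real (card X) * \<tau>1 + real (card Y) * \<tau>2" by simp
    also have "\<dots> \<le> (real (card D) + real (card H)) * \<tau>1 + (real (card D) + real (card H) + real (card R)) * \<tau>2"
    proof -
      have "card X \<le> card (D \<union> H)" unfolding X_def using fDV fH by (intro card_mono) auto
      also have "\<dots> \<le> card D + card H" by (rule card_Un_le)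
      finally have cX: "real (card X) \<le> real (card D) + real (card H)" by linarith
      have "Y \<subseteq> D \<union> H \<union> R" unfolding Y_def R_def by auto
      then have "card Y \<le> card (D \<union> H \<union> R)" using fDV fH fX by (intro card_mono) auto
      also have "\<dots> \<le> card (D \<union> H) + card R" by (rule card_Un_le)
      also have "\<dots> \<le> card D + card H + card R" using card_Un_le[of D H] by linarith
      finally have cY: "real (card Y) \<le> real (card D) + real (card H) + real (card R)" by linarith
      show ?thesis using cX cY t1pos t2pos by (intro add_mono mult_right_mono) auto
    qed
    finally have up2: "f ((X \<union> Y) \<union> S) - f S \<le>
        (real (card D) + real (card H)) * (\<tau>1 + \<tau>2) + real (card R) * \<tau>2" by (simp add: algebra_simps)
    define Wq where "Wq = H \<union> R"
    have WqQ: "Wq \<subseteq> Q" unfolding Wq_def R_def using HQ by auto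
    have low1: "f (D \<union> Wq) \<le> f ((X \<union> Y) \<union> S)"
    proof (intro monoD[OF mono sub])
      show "D \<union> Wq \<subseteq> X \<union> Y \<union> S" unfolding Wq_def X_def Y_def R_def using DV HQ QV TL by blast
      show "X \<union> Y \<union> S \<subseteq> V" using XYV SV by auto
    qed
    have low2: "f (D \<union> Wq) - f D \<ge> (\<Sum>x\<in>H. g x) + (\<Sum>x\<in>R. g x)"
    proof -
      have "(\<Sum>x\<in>Wq. g x) = (\<Sum>x\<in>H. g x) + (\<Sum>x\<in>R. g x)"
        unfolding Wq_def using fH fX by (intro sum.union_disjoint) (auto simp: R_def)
      then show ?thesis using gle WqQ by auto
    qed
    have Zeq: "ZL m (\<lambda>x. g x - \<tau>2) (Q - H) xs = (\<Sum>x\<in>R. g x) - real (card R) * \<tau>2"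
    proof -
      have "ZL m (\<lambda>x. g x - \<tau>2) (Q - H) xs = (\<Sum>x\<in>R. g x - \<tau>2)" unfolding ZL_def R_def L_def
        using fQ by (simp add: sum.inter_filter[symmetric] Int_def)
      then show ?thesis by (simp add: sum_subtractf)
    qed
    have fSlow: "f S \<ge> f D + (\<Sum>x\<in>H. g x) + ZL m (\<lambda>x. g x - \<tau>2) (Q - H) xs
                     - (real (card D) + real (card H)) * (\<tau>1 + \<tau>2)"
      using up2 low1 low2 Zeq by linarith
    define pL where "pL = real (card V - m) / real (card V)"
    define GH where "GH = (\<Sum>x\<in>H. g x)"
    define GR where "GR = (\<Sum>x\<in>Q - H. g x)"
    have E2': "ZL m (\<lambda>x. g x - \<tau>2) (Q - H) xs \<ge> pL * (GR - real (card (Q - H)) * \<tau>2) - W/100"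
    proof -
      have "(\<Sum>x\<in>Q - H. g x - \<tau>2) = GR - real (card (Q - H)) * \<tau>2"
        unfolding GR_def by (simp add: sum_subtractf)
      then show ?thesis using E2 unfolding \<tau>2_def[symmetric] pL_def by simp
    qed
    have bsplit: "(\<Sum>x\<in>Q. g x) = GH + GR" unfolding GH_def GR_def
      using fQ HQ by (metis sum.subset_diff add.commute)
    have bge: "(\<Sum>x\<in>Q. g x) \<ge> W - f D"
    proof -
      have "D \<union> Q = D \<union> Os" using Qdef by auto
      moreover have "f Os \<le> f (D \<union> Os)" using DV OsV by (intro monoD[OF mono sub]) auto
      ultimately show ?thesis using gsum fOs by simp
    qed
    have ble: "(\<Sum>x\<in>Q. g x) \<le> W"
    proof -
      have "f (D \<union> Q) - f D \<le> f ({} \<union> Q) - f {}" using DV QV by (intro marg_mono[OF mono sub]) auto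
      moreover have "card Q \<le> k" using Qdef Oscard OsV finV
        by (meson Diff_subset card_mono finite_subset order_trans)
      then have "f Q \<le> W" using optb QV by auto
      ultimately show ?thesis using gsum f0 by simp
    qed
    have g0H: "GH \<ge> 0" "GR \<ge> 0" unfolding GH_def GR_def using g0 by (auto intro: sum_nonneg)
    have cH: "real (card H) * 10000 \<le> real k"
    proof -
      have "(\<Sum>x\<in>H. 10000 * W / real k) \<le> GH" unfolding GH_def using Hdef by (intro sum_mono) auto
      then have "real (card H) * (10000 * W / real k) \<le> W" using bsplit ble g0H by simp
      then have "real (card H) * 10000 * W \<le> real k * W" using kpos by (simp add: field_simps)
      then show ?thesis using Wpos by (simp add: mult_le_cancel_right)
    qed
    have nk: "real n \<ge> real k" using kn n_def by simp
    have npos: "real n > 0" using nk kpos by linarith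
    have pLlo: "pL \<ge> 1/10" and pLhi: "pL \<le> 1/10 + 1/real n"
    proof -
      have a1: "10 * m \<le> 9 * n" using mdef n_def by simp
      have a2: "9 * n \<le> 10 * m + 9" using mdef n_def by simp
      have b1: "real n \<le> 10 * real (n - m)" using a1 mn by (simp add: of_nat_diff)
      have b2: "10 * real (n - m) \<le> real n + 9" using a2 mn by (simp add: of_nat_diff)
      show "pL \<ge> 1/10" unfolding pL_def n_def[symmetric] using b1 npos by (simp add: field_simps)
      have "pL \<le> (real n + 9) / (10 * real n)" unfolding pL_def n_def[symmetric] using b2 npos
        by (simp add: field_simps)
      also have "\<dots> \<le> 1/10 + 1/real n" using npos by (simp add: field_simps)
      finally show "pL \<le> 1/10 + 1/real n" .
    qed
    have p1: "pL * GR \<ge> GR / 10" using pLlo g0H by (simp add: mult_right_mono[of "1/10" pL GR, simplified])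
    have cQH: "real (card (Q - H)) \<le> real k"
    proof -
      have "card (Q - H) \<le> card Os" using Qdef OsV finV by (meson Diff_subset card_mono finite_subset order_trans)
      then show ?thesis using Oscard by simp
    qed
    have p2: "pL * (real (card (Q - H)) * \<tau>2) \<le> W/100 + W / 2000000000"
    proof -
      have "pL * (real (card (Q - H)) * \<tau>2) \<le> (1/10 + 1/real n) * (real k * \<tau>2)"
        using pLhi cQH t2pos pLlo by (intro mult_mono) auto
      also have "\<dots> = (1/10 + 1/real n) * (W/10)" unfolding \<tau>2_def using kpos by simp
      also have "\<dots> \<le> (1/10 + 1/(2*10^8)) * (W/10)"
      proof -
        have "1/real n \<le> 1/(2*10^8)" using nk kbig npos by (simp add: field_simps)
        then show ?thesis using Wpos by (intro mult_right_mono) auto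
      qed
      finally show ?thesis by simp
    qed
    have cost: "(real (card D) + real (card H)) * (\<tau>1 + \<tau>2) \<le> 15015/1000000 * W"
    proof -
      have "(real (card D) + real (card H)) * (\<tau>1 + \<tau>2) \<le> (15/100000 * real k) * (\<tau>1 + \<tau>2)"
        using Dcard cH t1pos t2pos by (intro mult_right_mono) auto
      also have "\<dots> = 15015/1000000 * W" unfolding \<tau>1_def \<tau>2_def using kpos by (simp add: field_simps)
      finally show ?thesis .
    qed
    have "f S \<ge> f D + GH + GR / 10 - W/100 - W / 2000000000 - W/100 - 15015/1000000 * W"
      using fSlow E2' p1 p2 cost unfolding GH_def[symmetric] by (simp add: algebra_simps)
    then show ?thesis unfolding alg using bsplit bge g0H fD Wpos by linarith
  qed
qed
end


lemma pLb: assumes "card V > 0" "m = 9 * card V div 10"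
  shows "real (card V - m) / real (card V) \<ge> 1/10"
    "real (card V - m) / real (card V) \<le> 1/10 + 1/real (card V)"
proof -
  define n where "n = card V"
  have npos: "real n > 0" using assms n_def by simp
  have mn: "m \<le> n" using assms n_def by simp
  have a1: "10 * m \<le> 9 * n" using assms n_def by simp
  have a2: "9 * n \<le> 10 * m + 9" using assms n_def by simp
  have b1: "real n \<le> 10 * real (n - m)" using a1 mn by (simp add: of_nat_diff)
  have b2: "10 * real (n - m) \<le> real n + 9" using a2 mn by (simp add: of_nat_diff)
  show "real (card V - m) / real (card V) \<ge> 1/10" unfolding n_def[symmetric] using b1 npos by (simp add: field_simps)
  have "real (card V - m) / real (card V) \<le> (real n + 9) / (10 * real n)" unfolding n_def[symmetric] using b2 npos
    by (simp add: field_simps)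
  also have "\<dots> \<le> 1/10 + 1/real n" using npos by (simp add: field_simps)
  finally show "real (card V - m) / real (card V) \<le> 1/10 + 1/real (card V)" unfolding n_def .
qed

lemma sq_bound: assumes "0 \<le> (x::real)" "x \<le> \<theta>" "t > 0" shows "(x - t)^2 \<le> x * \<theta> + t^2"
proof (cases "x \<ge> t")
  case True
  have "(x - t)^2 \<le> x^2" using True assms by (intro power_mono) auto
  also have "\<dots> \<le> x * \<theta>" using assms by (simp add: power2_eq_square mult_left_mono)
  finally have "(x - t)^2 \<le> x * \<theta>" .
  then show ?thesis using zero_le_power2[of t] by linarith
next
  case False
  have "(x - t)^2 = (t - x)^2" by (simp add: power2_commute)
  also have "\<dots> \<le> t^2" using False assms by (intro power_mono) auto
  finally have "(x - t)^2 \<le> t^2" .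
  moreover have "x * \<theta> \<ge> 0" using assms by simp
  ultimately show ?thesis by linarith
qed

theorem mainTheorem5:
  fixes V :: "'a set" and f :: "'a set \<Rightarrow> real" and k :: nat
  assumes "finite V"
    and "monotone_fn V f" and "submodular V f" and "f {} = 0"
    and "\<forall>S\<subseteq>V. f S \<ge> 0"
    and "k \<le> card V" and "real k \<ge> 2 * 10^8"
    and "\<exists>D. dense V f k D"
  shows "measure_pmf.prob (pmf_of_set (permutations_of_set V))
           {xs. f (algorithm1 f (OPT V f k) k xs) \<ge> 50025 / 100000 * OPT V f k} \<ge> 1 / 100"
proof -
  note finV = assms(1) and mono = assms(2) and sub = assms(3) and f0 = assms(4) and fnn = assms(5)
    and kn = assms(6) and kbig = assms(7)
  define P where "P = permutations_of_set V"
  define W where "W = OPT V f k"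
  define G where "G = {xs. f (algorithm1 f W k xs) \<ge> 50025 / 100000 * W}"
  have finP: "finite P" and neP: "P \<noteq> {}" unfolding P_def using finV by auto
  have cPpos: "real (card P) > 0" using finP neP by (simp add: card_gt_0_iff)
  have probeq: "measure_pmf.prob (pmf_of_set P) G = real (card (P \<inter> G)) / real (card P)"
    using finP neP by (simp add: measure_pmf_of_set)
  have W0: "W \<ge> 0" using OPT_ge[OF finV, of "{}" k f] f0 unfolding W_def by simp
  have algV: "algorithm1 f W k xs \<subseteq> V" if "xs \<in> P" for xs
    using alg_sub[of "{}" f W k "length xs" 1 xs] permutations_of_setD[OF that[unfolded P_def]]
    unfolding algorithm1_def by auto
  have main: "real (card (P \<inter> G)) \<ge> real (card P) / 100"
  proof (cases "W = 0")
    case True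
    have "P \<inter> G = P" using algV fnn unfolding G_def True by auto
    then show ?thesis using cPpos by simp
  next
    case False
    then have Wpos: "W > 0" using W0 by simp
    obtain D where dD: "dense V f k D" using assms(8) by blast
    have DV: "D \<subseteq> V" and Dcard: "real (card D) \<le> 5/100000 * real k" and fD: "f D \<ge> 495/1000 * W"
      using dD unfolding dense_def eta_def gamma_def W_def by auto
    obtain Os where Os: "Os \<subseteq> V" "card Os \<le> k" "f Os = W" using OPT_att[OF finV] unfolding W_def by blast
    define Q where "Q = Os - D"
    have fDfin: "finite D" using DV finV finite_subset by blast
    have QV: "Q \<subseteq> V" using Os(1) Q_def by auto
    have fQ: "finite Q" using QV finV finite_subset by blast
    obtain h where h: "\<forall>x. 0 \<le> h x" "sum h D = f ({} \<union> D) - f {}" "\<forall>Y\<subseteq>D. sum h Y \<le> f ({} \<union> Y) - f {}"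
      using weights[OF mono sub fDfin DV, of "{}"] by auto
    have hsum: "sum h D = f D" and hle: "\<forall>Y. Y \<subseteq> D \<longrightarrow> sum h Y \<le> f Y" using h f0 by auto
    obtain g where g: "\<forall>x. 0 \<le> g x" "sum g Q = f (D \<union> Q) - f D" "\<forall>Y. Y \<subseteq> Q \<longrightarrow> sum g Y \<le> f (D \<union> Y) - f D"
      using weights[OF mono sub fQ QV DV] by auto
    define H where "H = {x\<in>Q. g x \<ge> 10000 * W / real k}"
    define m where "m = 9 * card V div 10"
    have optb: "\<forall>S. S \<subseteq> V \<longrightarrow> card S \<le> k \<longrightarrow> f S \<le> W" using OPT_ge[OF finV] unfolding W_def by blast
    have kpos: "real k > 0" using kbig by simp
    have nk: "real (card V) \<ge> real k" using kn by simp
    have n2: "card V \<ge> 2"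
    proof -
      have "real k \<ge> 200000000" using kbig by simp
      then have "real (card V) \<ge> 2" using nk by linarith
      then show ?thesis by simp
    qed
    have mn: "m \<le> card V" unfolding m_def by simp
    have cPe: "cP V = real (card P)" unfolding P_def by (rule cP_def[OF finV n2 mn])
    define pLv where "pLv = real (card V - m) / real (card V)"
    have pLe: "pL V m = pLv" unfolding pLv_def by (rule pL_def[OF finV n2 mn])
    have pLlo: "pLv \<ge> 1/10" and pLhi0: "pLv \<le> 1/10 + 1/real (card V)"
      using pLb[of V m] n2 unfolding pLv_def m_def by auto
    have pLhi: "pLv \<le> 1/10 + 1/(2*10^8)"
    proof -
      have "1/real (card V) \<le> 1/(2*10^8)" using nk kbig kpos by (simp add: field_simps)
      then show ?thesis using pLhi0 by linarith
    qed
    define c where "c = (\<lambda>x. g x - 1/(10*real k) * W)"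
    define F1 where "F1 = {xs\<in>P. ZL m h D xs > f D - 41/100 * W}"
    define F2 where "F2 = {xs\<in>P. ZL m c (Q - H) xs < pLv * (\<Sum>x\<in>Q - H. c x) - W/100}"
    have good: "xs \<in> G" if xsP: "xs \<in> P" and n1: "xs \<notin> F1" and n2': "xs \<notin> F2" for xs
    proof -
      have E1: "ZL m h D xs \<le> f D - 41/100 * W" using n1 xsP unfolding F1_def by auto
      have E2: "real (card V - m) / real (card V) * (\<Sum>x\<in>Q - H. g x - 1/(10*real k) * W) - W/100
               \<le> ZL m (\<lambda>x. g x - 1/(10*real k) * W) (Q - H) xs"
        using n2' xsP unfolding F2_def c_def pLv_def by auto
      have "50025 / 100000 * W \<le> f (algorithm1 f W k xs)"
        by (rule det[OF mono sub finV Wpos kbig kn f0 optb xsP[unfolded P_def] DV Dcard fD Os Q_def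
              h(1) hsum hle g H_def m_def E1 E2])
      then show ?thesis unfolding G_def by simp
    qed
    define cp where "cp = real (card P)"
    have DsubV: "D \<subseteq> V" by (rule DV)
    have cF1: "real (card F1) \<le> 59/100 * cp"
    proof -
      define t where "t = f D - 41/100 * W"
      have tpos: "t > 0" using fD Wpos unfolding t_def by linarith
      have nn: "\<forall>xs\<in>P. ZL m h D xs \<ge> 0" unfolding ZL_def using h(1) by (auto intro: sum_nonneg)
      have "real (card {xs\<in>P. ZL m h D xs \<ge> t}) * t \<le> (\<Sum>xs\<in>P. ZL m h D xs)"
        by (rule markov_count[OF finP nn tpos])
      also have "\<dots> = cp * pLv * f D"
        using first_moment[OF finV n2 mn DV, of h] hsum cPe pLe unfolding P_def cp_def by simp
      finally have A: "real (card {xs\<in>P. ZL m h D xs \<ge> t}) * t \<le> cp * pLv * f D" .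
      have "card F1 \<le> card {xs\<in>P. ZL m h D xs \<ge> t}" unfolding F1_def t_def
        using finP by (intro card_mono) auto
      then have B: "real (card F1) * t \<le> cp * pLv * f D" using A tpos
        by (meson mult_right_mono of_nat_le_iff order_trans less_imp_le)
      have cp0: "cp \<ge> 0" unfolding cp_def by simp
      have fD0: "f D \<ge> 0" using fD Wpos by linarith
      have "pLv * f D \<le> (1/10 + 1/(2*10^8)) * f D" using pLhi fD0 by (intro mult_right_mono) auto
      also have "\<dots> \<le> 59/100 * t" unfolding t_def using fD Wpos by simp
      finally have "cp * (pLv * f D) \<le> cp * (59/100 * t)" using cp0 by (intro mult_left_mono) auto
      then have "real (card F1) * t \<le> (59/100 * cp) * t" using B by (simp add: algebra_simps)
      then show ?thesis using tpos by (simp add: mult_le_cancel_right)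
    qed
    have cF2: "real (card F2) \<le> 6/100 * cp"
    proof -
      define \<tau>2 where "\<tau>2 = 1/(10*real k) * W"
      define \<theta> where "\<theta> = 10000 * W / real k"
      have t2pos: "\<tau>2 > 0" unfolding \<tau>2_def using kpos Wpos by simp
      define \<phi> where "\<phi> xs = (ZL m c (Q - H) xs - pLv * (\<Sum>x\<in>Q - H. c x))^2" for xs
      have QHV: "Q - H \<subseteq> V" using QV by auto
      have nn: "\<forall>xs\<in>P. \<phi> xs \<ge> 0" unfolding \<phi>_def by simp
      have tp: "(W/100)^2 > 0" using Wpos by simp
      have "real (card {xs\<in>P. \<phi> xs \<ge> (W/100)^2}) * (W/100)^2 \<le> (\<Sum>xs\<in>P. \<phi> xs)"
        by (rule markov_count[OF finP nn tp])
      also have "\<dots> \<le> cp * pLv * (\<Sum>x\<in>Q - H. (c x)^2)"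
        using variance_bound[OF finV n2 mn QHV, of c] cPe pLe unfolding \<phi>_def P_def cp_def by simp
      finally have A: "real (card {xs\<in>P. \<phi> xs \<ge> (W/100)^2}) * (W/100)^2 \<le> cp * pLv * (\<Sum>x\<in>Q - H. (c x)^2)" .
      have "card F2 \<le> card {xs\<in>P. \<phi> xs \<ge> (W/100)^2}"
      proof (intro card_mono)
        show "finite {xs\<in>P. \<phi> xs \<ge> (W/100)^2}" using finP by simp
        show "F2 \<subseteq> {xs\<in>P. \<phi> xs \<ge> (W/100)^2}"
        proof
          fix xs assume "xs \<in> F2"
          then have xs: "xs \<in> P" "ZL m c (Q - H) xs < pLv * (\<Sum>x\<in>Q - H. c x) - W/100" unfolding F2_def by auto
          have "W/100 \<le> \<bar>ZL m c (Q - H) xs - pLv * (\<Sum>x\<in>Q - H. c x)\<bar>" using xs(2) by linarith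
          then have "(W/100)^2 \<le> (\<bar>ZL m c (Q - H) xs - pLv * (\<Sum>x\<in>Q - H. c x)\<bar>)^2"
            using Wpos by (intro power_mono) auto
          then show "xs \<in> {xs\<in>P. \<phi> xs \<ge> (W/100)^2}" using xs(1) unfolding \<phi>_def by simp
        qed
      qed
      then have B: "real (card F2) * (W/100)^2 \<le> cp * pLv * (\<Sum>x\<in>Q - H. (c x)^2)" using A tp
        by (meson mult_right_mono of_nat_le_iff order_trans less_imp_le)
      have gQ: "(\<Sum>x\<in>Q. g x) \<le> W"
      proof -
        have "f (D \<union> Q) - f D \<le> f ({} \<union> Q) - f {}" using DV QV by (intro marg_mono[OF mono sub]) auto
        moreover have "card Q \<le> k" using Q_def Os finV
          by (meson Diff_subset card_mono finite_subset order_trans)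
        then have "f Q \<le> W" using optb QV by auto
        ultimately show ?thesis using g(2) f0 by simp
      qed
      have gQH: "(\<Sum>x\<in>Q - H. g x) \<le> W"
      proof -
        have "(\<Sum>x\<in>Q - H. g x) \<le> (\<Sum>x\<in>Q. g x)" using fQ g(1) by (intro sum_mono2) auto
        then show ?thesis using gQ by linarith
      qed
      have cQH: "real (card (Q - H)) \<le> real k"
      proof -
        have "card (Q - H) \<le> card Os" using Q_def Os finV by (meson Diff_subset card_mono finite_subset order_trans)
        then show ?thesis using Os by simp
      qed
      have "(\<Sum>x\<in>Q - H. (c x)^2) \<le> (\<Sum>x\<in>Q - H. g x * \<theta> + \<tau>2^2)"
      proof (rule sum_mono)
        fix x assume x: "x \<in> Q - H"
        then have "g x \<le> \<theta>" unfolding H_def \<theta>_def by auto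
        then show "(c x)^2 \<le> g x * \<theta> + \<tau>2^2" unfolding c_def \<tau>2_def[symmetric]
          using sq_bound g(1) t2pos by auto
      qed
      also have "\<dots> = \<theta> * (\<Sum>x\<in>Q - H. g x) + real (card (Q - H)) * \<tau>2^2"
        by (simp add: sum.distrib sum_distrib_left[symmetric] mult.commute)
      also have "\<dots> \<le> \<theta> * W + real k * \<tau>2^2"
      proof (intro add_mono mult_left_mono mult_right_mono)
        show "\<theta> \<ge> 0" unfolding \<theta>_def using Wpos kpos by simp
      qed (use gQH cQH in auto)
      also have "\<dots> = W^2 * (1000001/100) / real k" unfolding \<theta>_def \<tau>2_def using kpos
        by (simp add: field_simps power2_eq_square)
      finally have C: "(\<Sum>x\<in>Q - H. (c x)^2) \<le> W^2 * (1000001/100) / real k" .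
      have "W^2 * (1000001/100) / real k \<le> W^2 * (1000001/100) / 200000000"
        using kbig kpos Wpos by (intro divide_left_mono) auto
      with C have C2: "(\<Sum>x\<in>Q - H. (c x)^2) \<le> W^2 * (1000001/100) / 200000000" by linarith
      have cp0: "cp \<ge> 0" unfolding cp_def by simp
      have pl0: "pLv \<ge> 0" using pLlo by linarith
      have "cp * pLv * (\<Sum>x\<in>Q - H. (c x)^2) \<le> cp * (1/10 + 1/(2*10^8)) * (W^2 * (1000001/100) / 200000000)"
        using cp0 pl0 pLhi C2 by (intro mult_mono) (auto intro: mult_left_mono sum_nonneg)
      also have "\<dots> \<le> (6/100 * cp) * (W/100)^2" using cp0 Wpos by (simp add: power2_eq_square field_simps)
      finally have "real (card F2) * (W/100)^2 \<le> (6/100 * cp) * (W/100)^2" using B by linarith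
      then show ?thesis using tp by (simp add: mult_le_cancel_right)
    qed
    have sub1: "P - (F1 \<union> F2) \<subseteq> P \<inter> G" using good by auto
    have "real (card (P - (F1 \<union> F2))) = cp - real (card (F1 \<union> F2))"
    proof -
      have "F1 \<union> F2 \<subseteq> P" unfolding F1_def F2_def by auto
      moreover have "finite (F1 \<union> F2)" using calculation finP finite_subset by blast
      ultimately have "card (P - (F1 \<union> F2)) = card P - card (F1 \<union> F2)" "card (F1 \<union> F2) \<le> card P"
        using finP by (auto simp: card_Diff_subset card_mono)
      then show ?thesis unfolding cp_def by (simp add: of_nat_diff)
    qed
    moreover have "card (F1 \<union> F2) \<le> card F1 + card F2" by (rule card_Un_le)
    moreover have "card (P - (F1 \<union> F2)) \<le> card (P \<inter> G)" using sub1 finP by (intro card_mono) auto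
    ultimately have "real (card (P \<inter> G)) \<ge> cp - real (card F1) - real (card F2)" by linarith
    then show ?thesis using cF1 cF2 cp_def cPpos by linarith
  qed
  have "real (card (P \<inter> G)) / real (card P) \<ge> 1/100" using main cPpos by (simp add: field_simps)
  then have "measure_pmf.prob (pmf_of_set P) G \<ge> 1/100" using probeq by simp
  then show ?thesis unfolding P_def W_def G_def .
qed


end
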